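(* Let $\mathcal G$ be a second-countable ample groupoid such that (1) $\mathcal G$ is minimal and effective, and (2) every compact open subset of $\mathcal G$ is regular open. Then $A_{\mathbb B}(\mathcal G)$ is congruence-simple.
   Context: $\mathbb B=(\{0,1\},\text{or},\text{and})$. An ample groupoid is a topological groupoid whose unit space $\mathcal G^{(0)}$ is locally compact Hausdorff and totally disconnected and whose source and range maps $s,r$ are local homeomorphisms ($\mathcal G$ need not be Hausdorff). $\mathcal G$ is minimal if $\mathcal G^{(0)}$ has no open invariant subsets other than $\varnothing$ and $\mathcal G^{(0)}$ (invariant: $s(\gamma)\in D\Rightarrow r(\gamma)\in D$); effective if the interior of $\{\gamma:s(\gamma)=r(\gamma)\}$ equals $\mathcal G^{(0)}$. A subset is regular open if it equals the interior of its closure. The Steinberg algebra $A_{\mathbb B}(\mathcal G)$ is the set of $\mathbb B$-valued functions on $\mathcal G$ that are finite sums of characteristic functions of compact open bisections, with pointwise addition and convolution $(f*g)(\gamma)=\sum_{\alpha\beta=\gamma}f(\alpha)g(\beta)$. A hemiring is congruence-simple if its only congruences are the full relation and the diagonal. *)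

theory Defs
  imports "HOL-Analysis.Analysis"
begin

text \<open>A topological groupoid on (a subset of) type 'a: the arrow space is the
  topological space gtop G (its carrier topspace (gtop G) is the set of arrows),
  units G is the unit space, src/rng the source and range maps, mult the partial
  composition (mult a b defined when src a = rng b) and ginv the inversion.\<close>

record 'a groupoid =
  gtop  :: "'a topology"
  units :: "'a set"
  src   :: "'a \<Rightarrow> 'a"
  rng   :: "'a \<Rightarrow> 'a"
  mult  :: "'a \<Rightarrow> 'a \<Rightarrow> 'a"
  ginv  :: "'a \<Rightarrow> 'a"

abbreviation arrows :: "('a, 'b) groupoid_scheme \<Rightarrow> 'a set" where
  "arrows G \<equiv> topspace (gtop G)"

definition composable :: "('a, 'b) groupoid_scheme \<Rightarrow> ('a \<times> 'a) set" where
  "composable G = {(a, b). a \<in> arrows G \<and> b \<in> arrows G \<and> src G a = rng G b}"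

definition is_groupoid :: "('a, 'b) groupoid_scheme \<Rightarrow> bool" where
  "is_groupoid G \<longleftrightarrow>
     units G \<subseteq> arrows G \<and>
     (\<forall>a \<in> arrows G. src G a \<in> units G \<and> rng G a \<in> units G) \<and>
     (\<forall>u \<in> units G. src G u = u \<and> rng G u = u) \<and>
     (\<forall>(a, b) \<in> composable G. mult G a b \<in> arrows G \<and>
         src G (mult G a b) = src G b \<and> rng G (mult G a b) = rng G a) \<and>
     (\<forall>a \<in> arrows G. \<forall>b \<in> arrows G. \<forall>c \<in> arrows G.
         src G a = rng G b \<longrightarrow> src G b = rng G c \<longrightarrow>
         mult G (mult G a b) c = mult G a (mult G b c)) \<and>
     (\<forall>a \<in> arrows G. mult G (rng G a) a = a \<and> mult G a (src G a) = a) \<and>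
     (\<forall>a \<in> arrows G. ginv G a \<in> arrows G \<and> src G (ginv G a) = rng G a \<and>
         rng G (ginv G a) = src G a \<and>
         mult G a (ginv G a) = rng G a \<and> mult G (ginv G a) a = src G a)"

definition topological_groupoid :: "('a, 'b) groupoid_scheme \<Rightarrow> bool" where
  "topological_groupoid G \<longleftrightarrow>
     is_groupoid G \<and>
     continuous_map (subtopology (prod_topology (gtop G) (gtop G)) (composable G)) (gtop G)
        (\<lambda>(a, b). mult G a b) \<and>
     continuous_map (gtop G) (gtop G) (ginv G)"

definition local_homeo_to_units :: "('a, 'b) groupoid_scheme \<Rightarrow> ('a \<Rightarrow> 'a) \<Rightarrow> bool" where
  "local_homeo_to_units G f \<longleftrightarrow>
     (\<forall>a \<in> arrows G. f a \<in> units G) \<and>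
     (\<forall>a \<in> arrows G. \<exists>V. openin (gtop G) V \<and> a \<in> V \<and>
        openin (subtopology (gtop G) (units G)) (f ` V) \<and>
        homeomorphic_map (subtopology (gtop G) V) (subtopology (gtop G) (f ` V)) f)"

definition totally_disconnected_space :: "'a topology \<Rightarrow> bool" where
  "totally_disconnected_space X \<longleftrightarrow>
     (\<forall>S. connectedin X S \<longrightarrow> (\<exists>x. S \<subseteq> {x}))"

definition ample_groupoid :: "('a, 'b) groupoid_scheme \<Rightarrow> bool" where
  "ample_groupoid G \<longleftrightarrow>
     topological_groupoid G \<and>
     locally_compact_space (subtopology (gtop G) (units G)) \<and>
     Hausdorff_space (subtopology (gtop G) (units G)) \<and>
     totally_disconnected_space (subtopology (gtop G) (units G)) \<and>
     local_homeo_to_units G (src G) \<and> local_homeo_to_units G (rng G)"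

definition invariant_set :: "('a, 'b) groupoid_scheme \<Rightarrow> 'a set \<Rightarrow> bool" where
  "invariant_set G D \<longleftrightarrow> (\<forall>g \<in> arrows G. src G g \<in> D \<longrightarrow> rng G g \<in> D)"

definition minimal_groupoid :: "('a, 'b) groupoid_scheme \<Rightarrow> bool" where
  "minimal_groupoid G \<longleftrightarrow>
     (\<forall>D. openin (subtopology (gtop G) (units G)) D \<and> invariant_set G D \<longrightarrow>
          D = {} \<or> D = units G)"

definition isotropy :: "('a, 'b) groupoid_scheme \<Rightarrow> 'a set" where
  "isotropy G = {g \<in> arrows G. src G g = rng G g}"

definition effective_groupoid :: "('a, 'b) groupoid_scheme \<Rightarrow> bool" where
  "effective_groupoid G \<longleftrightarrow> (gtop G) interior_of (isotropy G) = units G"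

definition regular_open_in :: "'a topology \<Rightarrow> 'a set \<Rightarrow> bool" where
  "regular_open_in X S \<longleftrightarrow> X interior_of (X closure_of S) = S"

definition bisection :: "('a, 'b) groupoid_scheme \<Rightarrow> 'a set \<Rightarrow> bool" where
  "bisection G B \<longleftrightarrow> B \<subseteq> arrows G \<and> inj_on (src G) B \<and> inj_on (rng G) B"

definition compact_open_bisection :: "('a, 'b) groupoid_scheme \<Rightarrow> 'a set \<Rightarrow> bool" where
  "compact_open_bisection G B \<longleftrightarrow>
     compactin (gtop G) B \<and> openin (gtop G) B \<and> bisection G B"

text \<open>Boolean Steinberg algebra: B-valued functions (True = 1, False = 0) that are
  finite sums (= finite disjunctions, as 1 + 1 = 1 in B) of characteristic functions
  of compact open bisections.\<close>
definition steinberg_B :: "('a, 'b) groupoid_scheme \<Rightarrow> ('a \<Rightarrow> bool) set" where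
  "steinberg_B G = {f. \<exists>F. finite F \<and> (\<forall>B \<in> F. compact_open_bisection G B) \<and>
                          f = (\<lambda>g. \<exists>B \<in> F. g \<in> B)}"

definition st_add :: "('a \<Rightarrow> bool) \<Rightarrow> ('a \<Rightarrow> bool) \<Rightarrow> ('a \<Rightarrow> bool)" where
  "st_add f h = (\<lambda>g. f g \<or> h g)"

definition st_conv :: "('a, 'b) groupoid_scheme \<Rightarrow> ('a \<Rightarrow> bool) \<Rightarrow> ('a \<Rightarrow> bool) \<Rightarrow> ('a \<Rightarrow> bool)" where
  "st_conv G f h = (\<lambda>g. \<exists>a b. (a, b) \<in> composable G \<and> mult G a b = g \<and> f a \<and> h b)"

definition hemiring_congruence ::
  "'c set \<Rightarrow> ('c \<Rightarrow> 'c \<Rightarrow> 'c) \<Rightarrow> ('c \<Rightarrow> 'c \<Rightarrow> 'c) \<Rightarrow> ('c \<times> 'c) set \<Rightarrow> bool" where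
  "hemiring_congruence A add mul R \<longleftrightarrow>
     equiv A R \<and>
     (\<forall>(x, y) \<in> R. \<forall>z \<in> A.
        (add x z, add y z) \<in> R \<and> (mul x z, mul y z) \<in> R \<and> (mul z x, mul z y) \<in> R)"

definition congruence_simple ::
  "'c set \<Rightarrow> ('c \<Rightarrow> 'c \<Rightarrow> 'c) \<Rightarrow> ('c \<Rightarrow> 'c \<Rightarrow> 'c) \<Rightarrow> bool" where
  "congruence_simple A add mul \<longleftrightarrow>
     (\<forall>R. hemiring_congruence A add mul R \<longrightarrow> R = A \<times> A \<or> R = Id_on A)"

end

theory Submission
  imports Defs
begin

lemma zero_dim:
  assumes lc: "locally_compact_space Y" and H: "Hausdorff_space Y"
    and td: "totally_disconnected_space Y" and Ob: "openin Y Ob" and xO: "x \<in> Ob"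
  shows "\<exists>K. compactin Y K \<and> openin Y K \<and> x \<in> K \<and> K \<subseteq> Ob"
proof -
  have "neighbourhood_base_of (compactin Y) Y"
    using lc H locally_compact_space_neighbourhood_base by blast
  then obtain U C where U: "openin Y U" and C: "compactin Y C" and xU: "x \<in> U"
    and UC: "U \<subseteq> C" and CO: "C \<subseteq> Ob"
    using Ob xO unfolding neighbourhood_base_of by meson
  define Z where "Z = subtopology Y C"
  have CY: "C \<subseteq> topspace Y" using C compactin_subset_topspace by blast
  have tZ: "topspace Z = C" using CY by (auto simp: Z_def)
  have cZ: "compact_space Z" using C by (simp add: Z_def compact_space_subtopology)
  have HZ: "Hausdorff_space Z" using H by (simp add: Z_def Hausdorff_space_subtopology)
  have nZ: "normal_space Z" using cZ HZ compact_Hausdorff_or_regular_imp_normal_space by blast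
  define \<Q> where "\<Q> = {Q. closedin Z Q \<and> openin Z Q \<and> x \<in> Q}"
  define Qx where "Qx = \<Inter>\<Q>"
  have CQ: "C \<in> \<Q>" using xU UC by (auto simp: \<Q>_def tZ[symmetric])
  have QxC: "Qx \<subseteq> C" using CQ by (auto simp: Qx_def)
  have xQx: "x \<in> Qx" by (auto simp: Qx_def \<Q>_def)
  have Qsub: "Q \<subseteq> C" if "Q \<in> \<Q>" for Q
    using that closedin_subset tZ by (auto simp: \<Q>_def)
  have finQ: "C \<inter> \<Inter>\<F> \<in> \<Q>" if "finite \<F>" "\<F> \<subseteq> \<Q>" for \<F>
    using that
  proof (induction rule: finite_induct)
    case empty then show ?case using CQ by simp
  next
    case (insert Q \<F>)
    then have "C \<inter> \<Inter>\<F> \<in> \<Q>" "Q \<in> \<Q>" by auto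
    then have "Q \<inter> (C \<inter> \<Inter>\<F>) \<in> \<Q>" by (auto simp: \<Q>_def)
    moreover have "C \<inter> \<Inter>(insert Q \<F>) = Q \<inter> (C \<inter> \<Inter>\<F>)" by auto
    ultimately show ?case by simp
  qed
  have sep: "\<exists>Q\<in>\<Q>. T \<inter> Q = {}" if T: "closedin Z T" "T \<inter> Qx = {}" for T
  proof -
    have "\<forall>C\<in>insert T \<Q>. closedin Z C" using T by (auto simp: \<Q>_def)
    moreover have "\<Inter>(insert T \<Q>) = {}" using T by (auto simp: Qx_def)
    ultimately have "\<exists>\<F>. finite \<F> \<and> \<F> \<subseteq> insert T \<Q> \<and> \<Inter>\<F> = {}"
      using cZ[unfolded compact_space_fip, rule_format, of "insert T \<Q>"] by blast
    then obtain \<F> where F: "finite \<F>" "\<F> \<subseteq> insert T \<Q>" "\<Inter>\<F> = {}" by blast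
    have 1: "C \<inter> \<Inter>(\<F> - {T}) \<in> \<Q>" using F by (intro finQ) auto
    have "T \<inter> (C \<inter> \<Inter>(\<F> - {T})) \<subseteq> \<Inter>\<F>" by auto
    then have 2: "T \<inter> (C \<inter> \<Inter>(\<F> - {T})) = {}" using F(3) by simp
    show ?thesis using 1 2 by (rule bexI[rotated])
  qed
  have QxZ: "closedin Z Qx"
    unfolding Qx_def using CQ by (intro closedin_Inter) (auto simp: \<Q>_def)
  have "connectedin Z Qx"
    unfolding connectedin
  proof (intro conjI notI)
    show "Qx \<subseteq> topspace Z" using QxC tZ by simp
  next
    assume "\<exists>E1 E2. openin Z E1 \<and> openin Z E2 \<and> Qx \<subseteq> E1 \<union> E2 \<and> E1 \<inter> E2 \<inter> Qx = {} \<and>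
                    E1 \<inter> Qx \<noteq> {} \<and> E2 \<inter> Qx \<noteq> {}"
    then obtain E1 E2 where E: "openin Z E1" "openin Z E2" "Qx \<subseteq> E1 \<union> E2" "E1 \<inter> E2 \<inter> Qx = {}"
      "E1 \<inter> Qx \<noteq> {}" "E2 \<inter> Qx \<noteq> {}" by blast
    have gen: False if F: "openin Z F1" "openin Z F2" "Qx \<subseteq> F1 \<union> F2" "F1 \<inter> F2 \<inter> Qx = {}"
      "F2 \<inter> Qx \<noteq> {}" "x \<in> F1" for F1 F2
    proof -
      have A1: "closedin Z (Qx - F2)" using QxZ F by blast
      have A2: "closedin Z (Qx - F1)" using QxZ F by blast
      have "disjnt (Qx - F2) (Qx - F1)" using F by (auto simp: disjnt_def)
      then obtain P1 P2 where P: "openin Z P1" "openin Z P2" "Qx - F2 \<subseteq> P1" "Qx - F1 \<subseteq> P2"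
        "disjnt P1 P2"
        using nZ A1 A2 unfolding normal_space_def by meson
      have "closedin Z (C - (P1 \<union> P2))" using P tZ by (metis closedin_diff closedin_topspace openin_Un)
      moreover have "(C - (P1 \<union> P2)) \<inter> Qx = {}" using P F by blast
      ultimately obtain Q where Q: "Q \<in> \<Q>" "(C - (P1 \<union> P2)) \<inter> Q = {}" using sep by blast
      have QC: "Q \<subseteq> C" using Q Qsub by blast
      have "Q \<inter> P1 = Q \<inter> (C - P2)" using Q QC P by (auto simp: disjnt_def)
      moreover have "closedin Z (Q \<inter> (C - P2))"
        using Q P tZ by (auto simp: \<Q>_def intro!: closedin_Int closedin_diff)
      moreover have "openin Z (Q \<inter> P1)" using Q P by (auto simp: \<Q>_def)
      moreover have "x \<in> Q \<inter> P1" using Q F xQx P by (auto simp: \<Q>_def)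
      ultimately have "Q \<inter> P1 \<in> \<Q>" by (auto simp: \<Q>_def)
      then have "Qx \<subseteq> P1" by (auto simp: Qx_def)
      then show False using F P unfolding disjnt_def by blast
    qed
    show False
    proof (cases "x \<in> E1")
      case True then show ?thesis using gen[of E1 E2] E by blast
    next
      case False
      then have "x \<in> E2" using E xQx by blast
      then show ?thesis using gen[of E2 E1] E by blast
    qed
  qed
  then have "connectedin Y Qx" by (simp add: Z_def connectedin_subtopology)
  then obtain y where "Qx \<subseteq> {y}" using td unfolding totally_disconnected_space_def by blast
  then have Qxx: "Qx = {x}" using xQx by blast
  have "closedin Z (C - U)"
    using U tZ unfolding Z_def by (metis closedin_diff closedin_topspace openin_subtopology_Int2 inf.absorb2 UC)
  moreover have "(C - U) \<inter> Qx = {}" using Qxx xU by blast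
  ultimately obtain Q where Q: "Q \<in> \<Q>" "(C - U) \<inter> Q = {}" using sep by blast
  have QU: "Q \<subseteq> U" using Q Qsub by blast
  have "openin Z Q" using Q by (auto simp: \<Q>_def)
  then obtain G where G: "openin Y G" "Q = G \<inter> C" unfolding Z_def openin_subtopology by blast
  have "Q = G \<inter> U" using G QU UC by blast
  then have "openin Y Q" using G U by blast
  moreover have "compactin Y Q"
    using Q cZ closedin_compact_space compactin_subtopology unfolding \<Q>_def Z_def by blast
  ultimately show ?thesis using Q QU UC CO unfolding \<Q>_def by blast
qed

lemma lh_props:
  assumes lh: "local_homeo_to_units G f" and U0: "openin (gtop G) (units G)" and a: "a \<in> arrows G"
  obtains V where "openin (gtop G) V" "a \<in> V" "openin (gtop G) (f ` V)"
    "homeomorphic_map (subtopology (gtop G) V) (subtopology (gtop G) (f ` V)) f"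
proof -
  obtain V where V: "openin (gtop G) V" "a \<in> V" "openin (subtopology (gtop G) (units G)) (f ` V)"
    "homeomorphic_map (subtopology (gtop G) V) (subtopology (gtop G) (f ` V)) f"
    using lh a unfolding local_homeo_to_units_def by blast
  then show ?thesis using that openin_trans_full[OF V(3) U0] by blast
qed

lemma lh_open_image:
  assumes lh: "local_homeo_to_units G f" and U0: "openin (gtop G) (units G)"
    and Ob: "openin (gtop G) Ob"
  shows "openin (gtop G) (f ` Ob)"
  unfolding openin_subopen[of _ "f ` Ob"]
proof
  fix y assume "y \<in> f ` Ob"
  then obtain a where a: "a \<in> Ob" "y = f a" by blast
  then have aA: "a \<in> arrows G" using Ob openin_subset by blast
  obtain V where V: "openin (gtop G) V" "a \<in> V" "openin (gtop G) (f ` V)"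
    and h: "homeomorphic_map (subtopology (gtop G) V) (subtopology (gtop G) (f ` V)) f"
    using lh_props[OF lh U0 aA] by blast
  have VX: "V \<subseteq> arrows G" using V openin_subset by blast
  have "openin (subtopology (gtop G) V) (Ob \<inter> V)"
    using Ob V by (simp add: openin_open_subtopology openin_Int)
  moreover have "Ob \<inter> V \<subseteq> topspace (subtopology (gtop G) V)" using VX by auto
  ultimately have "openin (subtopology (gtop G) (f ` V)) (f ` (Ob \<inter> V))"
    using homeomorphic_map_openness[OF h] by blast
  then have "openin (gtop G) (f ` (Ob \<inter> V))" using openin_trans_full V by blast
  then show "\<exists>T. openin (gtop G) T \<and> y \<in> T \<and> T \<subseteq> f ` Ob"
    using a V by blast
qed

lemma lh_preimage:
  assumes lh: "local_homeo_to_units G f" and U0: "openin (gtop G) (units G)"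
    and Q: "openin (gtop G) Q"
  shows "openin (gtop G) {a \<in> arrows G. f a \<in> Q}"
  unfolding openin_subopen[of _ "{a \<in> arrows G. f a \<in> Q}"]
proof
  fix a assume "a \<in> {a \<in> arrows G. f a \<in> Q}"
  then have aA: "a \<in> arrows G" and aQ: "f a \<in> Q" by auto
  obtain V where V: "openin (gtop G) V" "a \<in> V" "openin (gtop G) (f ` V)"
    and h: "homeomorphic_map (subtopology (gtop G) V) (subtopology (gtop G) (f ` V)) f"
    using lh_props[OF lh U0 aA] by blast
  have VX: "V \<subseteq> arrows G" using V openin_subset by blast
  have c: "continuous_map (subtopology (gtop G) V) (subtopology (gtop G) (f ` V)) f"
    using h homeomorphic_imp_continuous_map by blast
  have "openin (subtopology (gtop G) (f ` V)) (f ` V \<inter> Q)"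
    using Q V by (simp add: openin_open_subtopology openin_Int)
  from openin_continuous_map_preimage[OF c this]
  have "openin (subtopology (gtop G) V) {x \<in> topspace (subtopology (gtop G) V). f x \<in> f ` V \<inter> Q}" .
  moreover have "{x \<in> topspace (subtopology (gtop G) V). f x \<in> f ` V \<inter> Q} = {v \<in> V. f v \<in> Q}"
    using VX by auto
  ultimately have "openin (subtopology (gtop G) V) {v \<in> V. f v \<in> Q}" by simp
  then have "openin (gtop G) {v \<in> V. f v \<in> Q}" using openin_trans_full V by blast
  then show "\<exists>T. openin (gtop G) T \<and> a \<in> T \<and> T \<subseteq> {a \<in> arrows G. f a \<in> Q}"
    using aQ V VX by blast
qed

lemma lh_cont:
  assumes lh: "local_homeo_to_units G f" and U0: "openin (gtop G) (units G)"
    and sub: "units G \<subseteq> arrows G"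
  shows "continuous_map (gtop G) (gtop G) f"
  unfolding continuous_map
proof
  show "f ` arrows G \<subseteq> arrows G" using lh sub unfolding local_homeo_to_units_def by blast
  show "\<forall>U. openin (gtop G) U \<longrightarrow> openin (gtop G) {x \<in> arrows G. f x \<in> U}"
    using lh_preimage[OF lh U0] by blast
qed

locale agp =
  fixes G :: "('a, 'b) groupoid_scheme"
  assumes grp: "is_groupoid G" and U0open: "openin (gtop G) (units G)"
    and lhs: "local_homeo_to_units G (src G)" and lhr: "local_homeo_to_units G (rng G)"
    and icont: "continuous_map (gtop G) (gtop G) (ginv G)"
    and lc: "locally_compact_space (subtopology (gtop G) (units G))"
    and Hd: "Hausdorff_space (subtopology (gtop G) (units G))"
    and td: "totally_disconnected_space (subtopology (gtop G) (units G))"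
begin

abbreviation "s \<equiv> src G"
abbreviation "r \<equiv> rng G"
abbreviation "m \<equiv> mult G"
abbreviation "i \<equiv> ginv G"
abbreviation "A \<equiv> arrows G"
abbreviation "U \<equiv> units G"
abbreviation "X \<equiv> gtop G"

lemma UA: "U \<subseteq> A" using grp unfolding is_groupoid_def by blast
lemma sU[simp]: "a \<in> A \<Longrightarrow> s a \<in> U" using grp unfolding is_groupoid_def by blast
lemma rU[simp]: "a \<in> A \<Longrightarrow> r a \<in> U" using grp unfolding is_groupoid_def by blast
lemma sA[simp]: "a \<in> A \<Longrightarrow> s a \<in> A" using UA sU by blast
lemma rA[simp]: "a \<in> A \<Longrightarrow> r a \<in> A" using UA rU by blast
lemma uA: "u \<in> U \<Longrightarrow> u \<in> A" using UA by blast
lemma su[simp]: "u \<in> U \<Longrightarrow> s u = u" using grp unfolding is_groupoid_def by blast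
lemma ru[simp]: "u \<in> U \<Longrightarrow> r u = u" using grp unfolding is_groupoid_def by blast
lemma mA[simp]: "a \<in> A \<Longrightarrow> b \<in> A \<Longrightarrow> s a = r b \<Longrightarrow> m a b \<in> A"
  using grp unfolding is_groupoid_def composable_def by blast
lemma sm[simp]: "a \<in> A \<Longrightarrow> b \<in> A \<Longrightarrow> s a = r b \<Longrightarrow> s (m a b) = s b"
  using grp unfolding is_groupoid_def composable_def by blast
lemma rm[simp]: "a \<in> A \<Longrightarrow> b \<in> A \<Longrightarrow> s a = r b \<Longrightarrow> r (m a b) = r a"
  using grp unfolding is_groupoid_def composable_def by blast
lemma assoc: "a \<in> A \<Longrightarrow> b \<in> A \<Longrightarrow> c \<in> A \<Longrightarrow> s a = r b \<Longrightarrow> s b = r c \<Longrightarrow>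
    m (m a b) c = m a (m b c)"
  using grp unfolding is_groupoid_def by blast
lemma lunit[simp]: "a \<in> A \<Longrightarrow> m (r a) a = a" using grp unfolding is_groupoid_def by blast
lemma runit[simp]: "a \<in> A \<Longrightarrow> m a (s a) = a" using grp unfolding is_groupoid_def by blast
lemma iA[simp]: "a \<in> A \<Longrightarrow> i a \<in> A" using grp unfolding is_groupoid_def by blast
lemma si[simp]: "a \<in> A \<Longrightarrow> s (i a) = r a" using grp unfolding is_groupoid_def by blast
lemma ri[simp]: "a \<in> A \<Longrightarrow> r (i a) = s a" using grp unfolding is_groupoid_def by blast
lemma mi[simp]: "a \<in> A \<Longrightarrow> m a (i a) = r a" using grp unfolding is_groupoid_def by blast
lemma im[simp]: "a \<in> A \<Longrightarrow> m (i a) a = s a" using grp unfolding is_groupoid_def by blast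

lemma ii[simp]: "a \<in> A \<Longrightarrow> i (i a) = a"
proof -
  assume a: "a \<in> A"
  have "i (i a) = m (r (i (i a))) (i (i a))" by (rule lunit[symmetric]) (simp add: a)
  also have "\<dots> = m (m a (i a)) (i (i a))" using a by simp
  also have "\<dots> = m a (m (i a) (i (i a)))" using a by (intro assoc) auto
  also have "\<dots> = a" using a by simp
  finally show ?thesis .
qed

lemma cancel: "w \<in> A \<Longrightarrow> c \<in> A \<Longrightarrow> r c = r w \<Longrightarrow> m (i w) c \<in> U \<Longrightarrow> c = w"
proof -
  assume w: "w \<in> A" and c: "c \<in> A" and rc: "r c = r w" and u: "m (i w) c \<in> U"
  have "c = m (r c) c" using c by simp
  also have "\<dots> = m (m w (i w)) c" using w rc by simp
  also have "\<dots> = m w (m (i w) c)" using w c rc by (intro assoc) auto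
  also have "m (i w) c = s w"
  proof -
    have "m (i w) c = r (m (i w) c)" using u by simp
    also have "\<dots> = s w" using w c rc by simp
    finally show ?thesis .
  qed
  finally show "c = w" using w by simp
qed

lemma unit_left: "u \<in> U \<Longrightarrow> b \<in> A \<Longrightarrow> s u = r b \<Longrightarrow> m u b = b"
  by (metis lunit su)
lemma unit_right: "u \<in> U \<Longrightarrow> b \<in> A \<Longrightarrow> s b = r u \<Longrightarrow> m b u = b"
  by (metis runit ru)

end

context agp begin

lemma s_open: "openin X W \<Longrightarrow> openin X (s ` W)" using lh_open_image[OF lhs U0open] by blast
lemma r_open: "openin X W \<Longrightarrow> openin X (r ` W)" using lh_open_image[OF lhr U0open] by blast
lemma s_pre: "openin X Q \<Longrightarrow> openin X {a \<in> A. s a \<in> Q}" using lh_preimage[OF lhs U0open] by blast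
lemma r_pre: "openin X Q \<Longrightarrow> openin X {a \<in> A. r a \<in> Q}" using lh_preimage[OF lhr U0open] by blast
lemma s_cont: "continuous_map X X s" using lh_cont[OF lhs U0open UA] .
lemma r_cont: "continuous_map X X r" using lh_cont[OF lhr U0open UA] .

lemma unit_cob: "V \<subseteq> U \<Longrightarrow> compactin X V \<Longrightarrow> openin X V \<Longrightarrow> compact_open_bisection G V"
  unfolding compact_open_bisection_def bisection_def using UA
proof (intro conjI)
  assume V: "V \<subseteq> U" "compactin X V" "openin X V"
  show "inj_on s V" by (rule inj_onI) (metis V(1) su subsetD)
  show "inj_on r V" by (rule inj_onI) (metis V(1) ru subsetD)
qed (use UA in auto)

lemma zd:
  assumes "openin X Ob" "x \<in> Ob" "x \<in> U"
  shows "\<exists>K. compactin X K \<and> openin X K \<and> x \<in> K \<and> K \<subseteq> Ob \<and> K \<subseteq> U"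
proof -
  have "openin (subtopology X U) (Ob \<inter> U)"
    using assms U0open by (simp add: openin_open_subtopology openin_Int)
  then obtain K where K: "compactin (subtopology X U) K" "openin (subtopology X U) K" "x \<in> K" "K \<subseteq> Ob \<inter> U"
    using zero_dim[OF lc Hd td] assms by blast
  then show ?thesis
    using openin_trans_full[OF K(2) U0open] compactin_subtopology by blast
qed

lemma hsep:
  assumes "p \<in> U" "q \<in> U" "p \<noteq> q"
  shows "\<exists>P Q. openin X P \<and> openin X Q \<and> p \<in> P \<and> q \<in> Q \<and> P \<inter> Q = {}"
proof -
  have "p \<in> topspace (subtopology X U)" "q \<in> topspace (subtopology X U)" using assms UA by auto
  then obtain P Q where "openin (subtopology X U) P" "openin (subtopology X U) Q" "p \<in> P" "q \<in> Q" "disjnt P Q"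
    using Hd assms unfolding Hausdorff_space_def by blast
  moreover have "openin X P" "openin X Q" using calculation(1,2) openin_trans_full U0open by blast+
  ultimately show ?thesis unfolding disjnt_def by blast
qed

lemma basis:
  assumes Ob: "openin X Ob" and g: "\<gamma> \<in> Ob"
  shows "\<exists>W. compact_open_bisection G W \<and> \<gamma> \<in> W \<and> W \<subseteq> Ob"
proof -
  have gA: "\<gamma> \<in> A" using Ob g openin_subset by blast
  obtain Vs where Vs: "openin X Vs" "\<gamma> \<in> Vs" "openin X (s ` Vs)"
    and hs: "homeomorphic_map (subtopology X Vs) (subtopology X (s ` Vs)) s"
    using lh_props[OF lhs U0open gA] by blast
  obtain Vr where Vr: "openin X Vr" "\<gamma> \<in> Vr"
    and hr: "homeomorphic_map (subtopology X Vr) (subtopology X (r ` Vr)) r"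
    using lh_props[OF lhr U0open gA] by blast
  have VsA: "Vs \<subseteq> A" using Vs openin_subset by blast
  have VrA: "Vr \<subseteq> A" using Vr openin_subset by blast
  have injs: "inj_on s Vs" using hs VsA unfolding homeomorphic_map_def by (simp add: Int_absorb1)
  have injr: "inj_on r Vr" using hr VrA unfolding homeomorphic_map_def by (simp add: Int_absorb1)
  define O' where "O' = Ob \<inter> Vs \<inter> Vr"
  have O'o: "openin X O'" using Ob Vs Vr by (auto simp: O'_def)
  then have "openin X (s ` O')" by (rule s_open)
  moreover have "s \<gamma> \<in> s ` O'" using g Vs Vr by (auto simp: O'_def)
  ultimately obtain K where K: "compactin X K" "openin X K" "s \<gamma> \<in> K" "K \<subseteq> s ` O'" "K \<subseteq> U"
    using zd gA by (metis sU)
  define W where "W = {v \<in> Vs. s v \<in> K}"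
  have WO: "W \<subseteq> O'"
  proof
    fix v assume v: "v \<in> W"
    then obtain z where o: "z \<in> O'" "s v = s z" using K by (auto simp: W_def)
    then have "v = z" using injs v by (auto simp: W_def O'_def inj_on_def)
    then show "v \<in> O'" using o by simp
  qed
  have Wo: "openin X W"
  proof -
    have "W = Vs \<inter> {a \<in> A. s a \<in> K}" using VsA by (auto simp: W_def)
    then show ?thesis using Vs s_pre[OF K(2)] by auto
  qed
  have sW: "s ` W = K"
  proof
    show "s ` W \<subseteq> K" by (auto simp: W_def)
    show "K \<subseteq> s ` W"
    proof
      fix k assume "k \<in> K"
      then obtain z where z: "z \<in> O'" "k = s z" using K by blast
      then have "z \<in> W" using \<open>k \<in> K\<close> unfolding W_def O'_def by blast
      then show "k \<in> s ` W" using z by blast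
    qed
  qed
  have "compactin (subtopology X (s ` Vs)) K"
    using K(1) K(4) unfolding compactin_subtopology O'_def by blast
  then have "compactin (subtopology X Vs) W"
    using homeomorphic_map_compactness[OF hs, of W] VsA sW by (auto simp: W_def)
  then have Wc: "compactin X W" using compactin_subtopology by blast
  have "bisection G W"
    unfolding bisection_def using WO VsA injs injr
    by (auto simp: O'_def intro: inj_on_subset)
  then show ?thesis using Wc Wo WO K(3) Vs(2) unfolding compact_open_bisection_def O'_def W_def by auto
qed

lemma inv_cob:
  assumes "compact_open_bisection G W"
  shows "compact_open_bisection G (i ` W)"
proof -
  have W: "compactin X W" "openin X W" "W \<subseteq> A" "inj_on s W" "inj_on r W"
    using assms unfolding compact_open_bisection_def bisection_def by auto
  have eq: "i ` W = {a \<in> A. i a \<in> W}"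
  proof
    show "i ` W \<subseteq> {a \<in> A. i a \<in> W}" using W(3) by auto
    show "{a \<in> A. i a \<in> W} \<subseteq> i ` W"
    proof
      fix a assume "a \<in> {a \<in> A. i a \<in> W}"
      then have "a \<in> A" "i a \<in> W" by auto
      then show "a \<in> i ` W" by (metis ii image_eqI)
    qed
  qed
  have "compactin X (i ` W)" using image_compactin[OF W(1) icont] .
  moreover have "openin X (i ` W)" unfolding eq using openin_continuous_map_preimage[OF icont W(2)] by simp
  moreover have "inj_on s (i ` W)"
  proof (rule inj_onI)
    fix x y assume "x \<in> i ` W" "y \<in> i ` W" "s x = s y"
    then obtain a b where ab: "a \<in> W" "b \<in> W" "x = i a" "y = i b" by blast
    then have "a \<in> A" "b \<in> A" using W(3) by blast+
    then have "r a = r b" using ab \<open>s x = s y\<close> by simp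
    then have "a = b" using W(5) ab inj_onD by metis
    then show "x = y" using ab by simp
  qed
  moreover have "inj_on r (i ` W)"
  proof (rule inj_onI)
    fix x y assume "x \<in> i ` W" "y \<in> i ` W" "r x = r y"
    then obtain a b where ab: "a \<in> W" "b \<in> W" "x = i a" "y = i b" by blast
    then have "a \<in> A" "b \<in> A" using W(3) by blast+
    then have "s a = s b" using ab \<open>r x = r y\<close> by simp
    then have "a = b" using W(4) ab inj_onD by metis
    then show "x = y" using ab by simp
  qed
  ultimately show ?thesis using W(3) unfolding compact_open_bisection_def bisection_def by auto
qed

end

context agp begin

lemma conv_iW_a:
  assumes WA: "W \<subseteq> A" and aW: "\<forall>w\<in>W. f w" and u: "u \<in> s ` W"
  shows "st_conv G (\<lambda>g. g \<in> i ` W) f u"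
proof -
  obtain w where w: "w \<in> W" "u = s w" using u by blast
  then have wA: "w \<in> A" using WA by blast
  have "(i w, w) \<in> composable G" using wA by (simp add: composable_def)
  moreover have "m (i w) w = u" using wA w by simp
  ultimately show ?thesis unfolding st_conv_def using w aW by blast
qed

lemma conv_iW_b:
  assumes WA: "W \<subseteq> A" and bA: "\<forall>g. f g \<longrightarrow> g \<in> A" and disj: "\<forall>w\<in>W. \<not> f w" and u: "u \<in> U"
  shows "\<not> st_conv G (\<lambda>g. g \<in> i ` W) f u"
proof
  assume "st_conv G (\<lambda>g. g \<in> i ` W) f u"
  then obtain x c where xc: "(x, c) \<in> composable G" "m x c = u" "x \<in> i ` W" "f c"
    unfolding st_conv_def by blast
  then obtain w where w: "w \<in> W" "x = i w" by blast
  then have wA: "w \<in> A" using WA by blast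
  have cA: "c \<in> A" using bA xc by blast
  have "r c = r w" using xc w wA unfolding composable_def by simp
  then have "c = w" using cancel[OF wA cA] xc w u by simp
  then show False using disj xc w by blast
qed

lemma conv_V_sq:
  assumes VU: "V \<subseteq> U" and pV: "\<forall>v\<in>V. p v"
  shows "\<forall>v\<in>V. st_conv G (\<lambda>g. g \<in> V) (st_conv G p (\<lambda>g. g \<in> V)) v"
proof
  fix v assume v: "v \<in> V"
  then have vU: "v \<in> U" using VU by blast
  then have vA: "v \<in> A" using UA by blast
  have comp: "(v, v) \<in> composable G" using vU vA by (simp add: composable_def)
  have mvv: "m v v = v" using vU vA by (simp add: unit_left)
  have "st_conv G p (\<lambda>g. g \<in> V) v" unfolding st_conv_def using comp mvv v pV by blast
  then show "st_conv G (\<lambda>g. g \<in> V) (st_conv G p (\<lambda>g. g \<in> V)) v"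
    unfolding st_conv_def using comp mvv v by blast
qed

lemma conv_V_zero:
  assumes VU: "V \<subseteq> U" and qA: "\<forall>g. q g \<longrightarrow> g \<in> A"
    and nq: "\<forall>e. q e \<longrightarrow> \<not> (s e \<in> V \<and> r e \<in> V)"
  shows "st_conv G (\<lambda>g. g \<in> V) (st_conv G q (\<lambda>g. g \<in> V)) = (\<lambda>_. False)"
proof (rule ext)
  fix g
  show "st_conv G (\<lambda>g. g \<in> V) (st_conv G q (\<lambda>g. g \<in> V)) g = False"
  proof (rule ccontr)
    assume "st_conv G (\<lambda>g. g \<in> V) (st_conv G q (\<lambda>g. g \<in> V)) g \<noteq> False"
    then obtain v1 y where 1: "(v1, y) \<in> composable G" "v1 \<in> V" "st_conv G q (\<lambda>g. g \<in> V) y"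
      unfolding st_conv_def by blast
    then obtain e v2 where 2: "(e, v2) \<in> composable G" "m e v2 = y" "q e" "v2 \<in> V"
      unfolding st_conv_def by blast
    have eA: "e \<in> A" using qA 2 by blast
    have v2U: "v2 \<in> U" using 2 VU by blast
    have se: "s e = v2" using 2 v2U unfolding composable_def by simp
    have ye: "y = e" using 2 v2U eA se by (metis unit_right ru)
    have v1U: "v1 \<in> U" using 1 VU by blast
    have "r e = v1" using 1 ye v1U unfolding composable_def by simp
    then show False using nq 2 se 1 by blast
  qed
qed

lemma conv_V_iE:
  assumes VU: "V \<subseteq> U" and EA: "E \<subseteq> A" and EV: "\<forall>e\<in>E. s e \<in> V"
  shows "st_conv G (\<lambda>g. g \<in> V) (\<lambda>g. g \<in> i ` E) = (\<lambda>g. g \<in> i ` E)"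
proof (rule ext, rule iffI)
  fix g
  assume "st_conv G (\<lambda>g. g \<in> V) (\<lambda>g. g \<in> i ` E) g"
  then obtain v x where vx: "(v, x) \<in> composable G" "m v x = g" "v \<in> V" "x \<in> i ` E"
    unfolding st_conv_def by blast
  have "v \<in> U" using vx VU by blast
  then have "m v x = x" using vx unit_left unfolding composable_def by blast
  then show "g \<in> i ` E" using vx by simp
next
  fix g
  assume "g \<in> i ` E"
  then obtain e where e: "e \<in> E" "g = i e" by blast
  then have eA: "e \<in> A" using EA by blast
  have "(s e, i e) \<in> composable G" using eA by (simp add: composable_def)
  moreover have "m (s e) (i e) = i e" using eA by (metis lunit ri iA)
  ultimately show "st_conv G (\<lambda>g. g \<in> V) (\<lambda>g. g \<in> i ` E) g"
    unfolding st_conv_def using e EV by blast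
qed

lemma conv_E_iE:
  assumes EA: "E \<subseteq> A" and inj: "inj_on s E"
  shows "st_conv G (\<lambda>g. g \<in> E) (\<lambda>g. g \<in> i ` E) = (\<lambda>g. g \<in> r ` E)"
proof (rule ext, rule iffI)
  fix g
  assume "st_conv G (\<lambda>g. g \<in> E) (\<lambda>g. g \<in> i ` E) g"
  then obtain e x where ex: "(e, x) \<in> composable G" "m e x = g" "e \<in> E" "x \<in> i ` E"
    unfolding st_conv_def by blast
  then obtain e' where e': "e' \<in> E" "x = i e'" by blast
  have A2: "e \<in> A" "e' \<in> A" using EA ex e' by auto
  then have "s e = s e'" using ex e' unfolding composable_def by simp
  then have "e = e'" using inj ex e' inj_onD by metis
  then have "g = r e" using ex e' A2 by simp
  then show "g \<in> r ` E" using ex by blast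
next
  fix g
  assume "g \<in> r ` E"
  then obtain e where e: "e \<in> E" "g = r e" by blast
  then have eA: "e \<in> A" using EA by blast
  have "(e, i e) \<in> composable G" using eA by (simp add: composable_def)
  moreover have "m e (i e) = g" using eA e by simp
  ultimately show "st_conv G (\<lambda>g. g \<in> E) (\<lambda>g. g \<in> i ` E) g"
    unfolding st_conv_def using e by blast
qed

lemma conv_zero_r: "st_conv G f (\<lambda>_. False) = (\<lambda>_. False)" by (simp add: st_conv_def)
lemma conv_zero_l: "st_conv G (\<lambda>_. False) f = (\<lambda>_. False)" by (simp add: st_conv_def)

lemma conv_B_S:
  assumes BA: "B \<subseteq> A" and SU: "\<forall>g. S g \<longrightarrow> g \<in> U" and cov: "\<forall>b\<in>B. S (s b)"
  shows "st_conv G (\<lambda>g. g \<in> B) S = (\<lambda>g. g \<in> B)"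
proof (rule ext, rule iffI)
  fix g
  assume "st_conv G (\<lambda>g. g \<in> B) S g"
  then obtain b c where bc: "(b, c) \<in> composable G" "m b c = g" "b \<in> B" "S c"
    unfolding st_conv_def by blast
  have "c \<in> U" using SU bc by blast
  then have "m b c = b" using bc unit_right unfolding composable_def by blast
  then show "g \<in> B" using bc by simp
next
  fix g assume g: "g \<in> B"
  then have gA: "g \<in> A" using BA by blast
  have "(g, s g) \<in> composable G" using gA by (simp add: composable_def)
  moreover have "m g (s g) = g" using gA by simp
  ultimately show "st_conv G (\<lambda>g. g \<in> B) S g" unfolding st_conv_def using g cov by blast
qed

end

context agp begin

lemma shrink1:
  assumes eff: "X interior_of isotropy G = U"
    and D: "compact_open_bisection G D" "D \<inter> U = {}"
    and O: "openin X Ob" "Ob \<noteq> {}" "Ob \<subseteq> U"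
  shows "\<exists>O'. openin X O' \<and> O' \<noteq> {} \<and> O' \<subseteq> Ob \<and> (\<forall>d\<in>D. \<not> (s d \<in> O' \<and> r d \<in> O'))"
proof -
  have DA: "D \<subseteq> A" and Do: "openin X D" and injs: "inj_on s D"
    using D(1) unfolding compact_open_bisection_def bisection_def by blast+
  define D' where "D' = D \<inter> {a \<in> A. s a \<in> Ob} \<inter> {a \<in> A. r a \<in> Ob}"
  have D'o: "openin X D'" unfolding D'_def by (intro openin_Int Do s_pre[OF O(1)] r_pre[OF O(1)])
  show ?thesis
  proof (cases "D' = {}")
    case True
    have "\<forall>d\<in>D. \<not> (s d \<in> Ob \<and> r d \<in> Ob)"
    proof (intro ballI notI)
      fix d assume d: "d \<in> D" "s d \<in> Ob \<and> r d \<in> Ob"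
      then have "d \<in> A" using DA by blast
      then have "d \<in> D'" using d unfolding D'_def by blast
      then show False using True by simp
    qed
    then show ?thesis using O by (intro exI[of _ Ob]) simp
  next
    case False
    have "\<exists>d\<in>D'. s d \<noteq> r d"
    proof (rule ccontr)
      assume "\<not> (\<exists>d\<in>D'. s d \<noteq> r d)"
      then have "D' \<subseteq> isotropy G" unfolding isotropy_def using DA unfolding D'_def by blast
      then have "D' \<subseteq> X interior_of isotropy G" using D'o interior_of_maximal by blast
      then have "D' \<subseteq> U" using eff by simp
      moreover have "D' \<subseteq> D" unfolding D'_def by blast
      ultimately have "D' \<subseteq> D \<inter> U" by blast
      then show False using False D(2) by simp
    qed
    then obtain d where d: "d \<in> D'" "s d \<noteq> r d" by blast
    have dA: "d \<in> A" using d DA unfolding D'_def by blast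
    have "s d \<in> U" "r d \<in> U" using dA by simp_all
    from hsep[OF this d(2)]
    obtain P Q where PQ: "openin X P" "openin X Q" "s d \<in> P" "r d \<in> Q" "P \<inter> Q = {}"
      by blast
    define O' where "O' = Ob \<inter> P \<inter> s ` (D' \<inter> {a \<in> A. r a \<in> Q})"
    have "openin X (D' \<inter> {a \<in> A. r a \<in> Q})" by (intro openin_Int D'o r_pre[OF PQ(2)])
    then have "openin X (s ` (D' \<inter> {a \<in> A. r a \<in> Q}))" by (rule s_open)
    then have "openin X O'" unfolding O'_def by (intro openin_Int O(1) PQ(1))
    moreover have "s d \<in> O'"
    proof -
      have "d \<in> D' \<inter> {a \<in> A. r a \<in> Q}" using d dA PQ by blast
      moreover have "s d \<in> Ob" using d unfolding D'_def by blast
      ultimately show ?thesis unfolding O'_def using PQ(3) by blast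
    qed
    moreover have "\<forall>e\<in>D. \<not> (s e \<in> O' \<and> r e \<in> O')"
    proof (intro ballI notI)
      fix e assume e: "e \<in> D" "s e \<in> O' \<and> r e \<in> O'"
      then obtain e' where e': "e' \<in> D'" "r e' \<in> Q" "s e = s e'" unfolding O'_def by blast
      have "e' \<in> D" using e' unfolding D'_def by blast
      then have "e = e'" using injs e e' inj_onD by metis
      then have "r e \<in> Q" using e' by simp
      moreover have "r e \<in> P" using e(2) unfolding O'_def by blast
      ultimately show False using PQ(5) by blast
    qed
    moreover have "O' \<subseteq> Ob" unfolding O'_def by blast
    ultimately show ?thesis by (intro exI[of _ O']) blast
  qed
qed

lemma shrink:
  assumes eff: "X interior_of isotropy G = U"
    and F: "finite F" "\<forall>D\<in>F. compact_open_bisection G D \<and> D \<inter> U = {}"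
    and O: "openin X Ob" "Ob \<noteq> {}" "Ob \<subseteq> U"
  shows "\<exists>O'. openin X O' \<and> O' \<noteq> {} \<and> O' \<subseteq> Ob \<and> (\<forall>D\<in>F. \<forall>d\<in>D. \<not> (s d \<in> O' \<and> r d \<in> O'))"
  using F
proof (induction rule: finite_induct)
  case empty
  then show ?case using O by blast
next
  case (insert D F)
  have "\<forall>D\<in>F. compact_open_bisection G D \<and> D \<inter> U = {}" using insert.prems by simp
  from insert.IH[OF this] obtain O1 where O1: "openin X O1" "O1 \<noteq> {}" "O1 \<subseteq> Ob" "\<forall>D\<in>F. \<forall>d\<in>D. \<not> (s d \<in> O1 \<and> r d \<in> O1)"
    by (elim exE conjE) blast
  have D1: "compact_open_bisection G D" "D \<inter> U = {}" using insert.prems by simp_all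
  have "O1 \<subseteq> U" using O1(3) O(3) by (rule subset_trans)
  from shrink1[OF eff D1 O1(1) O1(2) this]
  obtain O2 where O2: "openin X O2" "O2 \<noteq> {}" "O2 \<subseteq> O1" "\<forall>d\<in>D. \<not> (s d \<in> O2 \<and> r d \<in> O2)"
    by blast
  have "O2 \<subseteq> Ob" using O2(3) O1(3) by (rule subset_trans)
  moreover have "\<forall>D'\<in>insert D F. \<forall>d\<in>D'. \<not> (s d \<in> O2 \<and> r d \<in> O2)"
    using O1(4) O2(3,4) by blast
  ultimately show ?case using O2(1,2) by blast
qed

end

context agp begin

lemma cob_SB: "compact_open_bisection G B \<Longrightarrow> (\<lambda>g. g \<in> B) \<in> steinberg_B G"
  unfolding steinberg_B_def by (rule CollectI, rule exI[of _ "{B}"]) auto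

lemma SB_A: "f \<in> steinberg_B G \<Longrightarrow> f g \<Longrightarrow> g \<in> A"
  unfolding steinberg_B_def compact_open_bisection_def bisection_def by blast

lemma zero_SB: "(\<lambda>_. False) \<in> steinberg_B G"
  unfolding steinberg_B_def by (rule CollectI, rule exI[of _ "{}"]) auto

lemma sumR:
  assumes cong: "hemiring_congruence (steinberg_B G) st_add (st_conv G) R"
    and Fs: "finite Fs" "\<forall>f\<in>Fs. (f, \<lambda>_. False) \<in> R"
  shows "((\<lambda>g. \<exists>f\<in>Fs. f g), \<lambda>_. False) \<in> R"
  using Fs
proof (induction rule: finite_induct)
  case empty
  have "((\<lambda>_. False), (\<lambda>_. False)) \<in> R"
    using cong zero_SB unfolding hemiring_congruence_def equiv_def refl_on_def by blast
  then show ?case by simp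
next
  case (insert f Fs)
  have 1: "((\<lambda>g. \<exists>f\<in>Fs. f g), \<lambda>_. False) \<in> R" using insert by simp
  have 2: "(f, \<lambda>_. False) \<in> R" using insert.prems by simp
  have "(\<lambda>g. \<exists>f\<in>Fs. f g) \<in> steinberg_B G"
    using 1 cong unfolding hemiring_congruence_def equiv_def by blast
  then have "(st_add f (\<lambda>g. \<exists>f\<in>Fs. f g), st_add (\<lambda>_. False) (\<lambda>g. \<exists>f\<in>Fs. f g)) \<in> R"
    using 2 cong unfolding hemiring_congruence_def by blast
  moreover have "st_add f (\<lambda>g. \<exists>f\<in>Fs. f g) = (\<lambda>g. \<exists>h\<in>insert f Fs. h g)"
    by (auto simp: st_add_def)
  moreover have "st_add (\<lambda>_. False) (\<lambda>g. \<exists>f\<in>Fs. f g) = (\<lambda>g. \<exists>f\<in>Fs. f g)"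
    by (auto simp: st_add_def)
  ultimately have "((\<lambda>g. \<exists>h\<in>insert f Fs. h g), (\<lambda>g. \<exists>f\<in>Fs. f g)) \<in> R" by simp
  then show ?case using 1 cong unfolding hemiring_congruence_def equiv_def trans_def by blast
qed

end

context agp begin

lemma cong_facts:
  assumes cong: "hemiring_congruence (steinberg_B G) st_add (st_conv G) R"
  shows "\<And>x y. (x, y) \<in> R \<Longrightarrow> x \<in> steinberg_B G \<and> y \<in> steinberg_B G"
    and "\<And>x. x \<in> steinberg_B G \<Longrightarrow> (x, x) \<in> R"
    and "\<And>x y. (x, y) \<in> R \<Longrightarrow> (y, x) \<in> R"
    and "\<And>x y z. (x, y) \<in> R \<Longrightarrow> (y, z) \<in> R \<Longrightarrow> (x, z) \<in> R"
    and "\<And>x y z. (x, y) \<in> R \<Longrightarrow> z \<in> steinberg_B G \<Longrightarrow> (st_add x z, st_add y z) \<in> R"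
    and "\<And>x y z. (x, y) \<in> R \<Longrightarrow> z \<in> steinberg_B G \<Longrightarrow> (st_conv G x z, st_conv G y z) \<in> R"
    and "\<And>x y z. (x, y) \<in> R \<Longrightarrow> z \<in> steinberg_B G \<Longrightarrow> (st_conv G z x, st_conv G z y) \<in> R"
  using cong unfolding hemiring_congruence_def equiv_def refl_on_def sym_def trans_def
  by blast+

lemma spread:
  assumes cong: "hemiring_congruence (steinberg_B G) st_add (st_conv G) R"
    and mini: "minimal_groupoid G"
    and V: "V \<subseteq> U" "V \<noteq> {}" "compactin X V" "openin X V"
    and VR: "((\<lambda>g. g \<in> V), (\<lambda>_. False)) \<in> R"
  shows "R = steinberg_B G \<times> steinberg_B G"
proof -
  note cf = cong_facts[OF cong]
  define \<E> where "\<E> = {E. compact_open_bisection G E \<and> (\<forall>e\<in>E. s e \<in> V)}"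
  have chrE: "((\<lambda>g. g \<in> r ` E), (\<lambda>_. False)) \<in> R" if E: "E \<in> \<E>" for E
  proof -
    have Ec: "compact_open_bisection G E" and EV: "\<forall>e\<in>E. s e \<in> V" using E by (auto simp: \<E>_def)
    have EA: "E \<subseteq> A" and injs: "inj_on s E"
      using Ec unfolding compact_open_bisection_def bisection_def by blast+
    have z1: "(\<lambda>g. g \<in> i ` E) \<in> steinberg_B G" using inv_cob[OF Ec] by (rule cob_SB)
    have z2: "(\<lambda>g. g \<in> E) \<in> steinberg_B G" using Ec by (rule cob_SB)
    have "(st_conv G (\<lambda>g. g \<in> V) (\<lambda>g. g \<in> i ` E), st_conv G (\<lambda>_. False) (\<lambda>g. g \<in> i ` E)) \<in> R"
      using cf(6)[OF VR z1] .
    then have "((\<lambda>g. g \<in> i ` E), (\<lambda>_. False)) \<in> R"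
      by (simp only: conv_V_iE[OF V(1) EA EV] conv_zero_l)
    from cf(7)[OF this z2]
    show ?thesis by (simp only: conv_E_iE[OF EA injs] conv_zero_r)
  qed
  define Orb where "Orb = r ` {a \<in> A. s a \<in> V}"
  have Vo: "openin X {a \<in> A. s a \<in> V}" using s_pre[OF V(4)] .
  have Orbo: "openin X Orb" unfolding Orb_def using r_open[OF Vo] .
  have OrbU: "Orb \<subseteq> U" unfolding Orb_def by auto
  have "openin (subtopology X U) Orb" using Orbo OrbU openin_open_subtopology[OF U0open] by blast
  moreover have "invariant_set G Orb"
    unfolding invariant_set_def
  proof (intro ballI impI)
    fix g assume g: "g \<in> A" "s g \<in> Orb"
    then obtain c where c: "c \<in> A" "s c \<in> V" "s g = r c" unfolding Orb_def by blast
    have "m g c \<in> A" "s (m g c) = s c" "r (m g c) = r g" using g c by simp_all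
    then show "r g \<in> Orb" unfolding Orb_def using c by (metis (mono_tags, lifting) image_eqI mem_Collect_eq)
  qed
  moreover have "Orb \<noteq> {}"
  proof -
    obtain v where v: "v \<in> V" using V(2) by blast
    then have "v \<in> U" using V(1) by blast
    then have "v \<in> A" "s v = v" "r v = v" using UA by auto
    then have "v \<in> Orb" unfolding Orb_def using v by (metis (mono_tags, lifting) image_eqI mem_Collect_eq)
    then show ?thesis by blast
  qed
  ultimately have OrbEq: "Orb = U" using mini unfolding minimal_groupoid_def by blast
  have cover: "\<exists>E\<in>\<E>. u \<in> r ` E" if u: "u \<in> U" for u
  proof -
    from u OrbEq obtain c where c: "c \<in> A" "s c \<in> V" "u = r c" unfolding Orb_def by blast
    then have "c \<in> {a \<in> A. s a \<in> V}" by simp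
    from basis[OF Vo this] obtain E where E: "compact_open_bisection G E" "c \<in> E" "E \<subseteq> {a \<in> A. s a \<in> V}"
      by blast
    then have "E \<in> \<E>" unfolding \<E>_def by blast
    then show ?thesis using E c by blast
  qed
  have allB: "((\<lambda>g. g \<in> B), (\<lambda>_. False)) \<in> R" if B: "compact_open_bisection G B" for B
  proof -
    have Bc: "compactin X B" and BA: "B \<subseteq> A" using B unfolding compact_open_bisection_def bisection_def by blast+
    have sBc: "compactin X (s ` B)" using image_compactin[OF Bc s_cont] .
    have op: "\<forall>T\<in>(\<lambda>E. r ` E) ` \<E>. openin X T"
    proof
      fix T assume "T \<in> (\<lambda>E. r ` E) ` \<E>"
      then obtain E where "E \<in> \<E>" "T = r ` E" by blast
      then show "openin X T" using r_open unfolding \<E>_def compact_open_bisection_def by blast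
    qed
    have cv: "s ` B \<subseteq> \<Union>((\<lambda>E. r ` E) ` \<E>)"
    proof
      fix u assume "u \<in> s ` B"
      then have "u \<in> U" using BA by auto
      then show "u \<in> \<Union>((\<lambda>E. r ` E) ` \<E>)" using cover by blast
    qed
    obtain \<F> where F: "finite \<F>" "\<F> \<subseteq> (\<lambda>E. r ` E) ` \<E>" "s ` B \<subseteq> \<Union>\<F>"
      using sBc op cv unfolding compactin_def by meson
    have FR: "\<forall>f\<in>(\<lambda>T. (\<lambda>g. g \<in> T)) ` \<F>. (f, \<lambda>_. False) \<in> R"
    proof
      fix f assume "f \<in> (\<lambda>T. (\<lambda>g. g \<in> T)) ` \<F>"
      then obtain T where T: "T \<in> \<F>" "f = (\<lambda>g. g \<in> T)" by blast
      then obtain E where "E \<in> \<E>" "T = r ` E" using F by blast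
      then show "(f, \<lambda>_. False) \<in> R" using chrE T by simp
    qed
    have "((\<lambda>g. \<exists>f\<in>(\<lambda>T. (\<lambda>g. g \<in> T)) ` \<F>. f g), \<lambda>_. False) \<in> R"
      using sumR[OF cong _ FR] F(1) by blast
    moreover have "(\<lambda>g. \<exists>f\<in>(\<lambda>T. (\<lambda>g. g \<in> T)) ` \<F>. f g) = (\<lambda>g. \<exists>T\<in>\<F>. g \<in> T)" by auto
    ultimately have SR: "((\<lambda>g. \<exists>T\<in>\<F>. g \<in> T), \<lambda>_. False) \<in> R" by simp
    have SU: "\<forall>g. (\<exists>T\<in>\<F>. g \<in> T) \<longrightarrow> g \<in> U"
    proof (intro allI impI)
      fix g assume "\<exists>T\<in>\<F>. g \<in> T"
      then obtain E where E: "E \<in> \<E>" "g \<in> r ` E" using F by blast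
      then have "E \<subseteq> A" unfolding \<E>_def compact_open_bisection_def bisection_def by blast
      then show "g \<in> U" using E by auto
    qed
    have cov: "\<forall>b\<in>B. \<exists>T\<in>\<F>. s b \<in> T" using F(3) by blast
    from cf(7)[OF SR cob_SB[OF B]]
    show ?thesis by (simp only: conv_B_S[OF BA SU cov] conv_zero_r)
  qed
  have allf: "(f, (\<lambda>_. False)) \<in> R" if f: "f \<in> steinberg_B G" for f
  proof -
    obtain F where F: "finite F" "\<forall>B\<in>F. compact_open_bisection G B" "f = (\<lambda>g. \<exists>B\<in>F. g \<in> B)"
      using f unfolding steinberg_B_def by blast
    have FR: "\<forall>h\<in>(\<lambda>T. (\<lambda>g. g \<in> T)) ` F. (h, \<lambda>_. False) \<in> R" using allB F(2) by blast
    have "((\<lambda>g. \<exists>h\<in>(\<lambda>T. (\<lambda>g. g \<in> T)) ` F. h g), \<lambda>_. False) \<in> R"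
      using sumR[OF cong _ FR] F(1) by blast
    moreover have "(\<lambda>g. \<exists>h\<in>(\<lambda>T. (\<lambda>g. g \<in> T)) ` F. h g) = f" using F(3) by auto
    ultimately show ?thesis by simp
  qed
  show ?thesis
  proof
    show "R \<subseteq> steinberg_B G \<times> steinberg_B G" using cf(1) by auto
    show "steinberg_B G \<times> steinberg_B G \<subseteq> R"
    proof clarify
      fix f h assume "f \<in> steinberg_B G" "h \<in> steinberg_B G"
      then have "(f, \<lambda>_. False) \<in> R" "(\<lambda>_. False, h) \<in> R" using allf cf(3) by blast+
      then show "(f, h) \<in> R" using cf(4) by blast
    qed
  qed
qed

end

context agp begin

lemma core:
  assumes cong: "hemiring_congruence (steinberg_B G) st_add (st_conv G) R"
    and eff: "X interior_of isotropy G = U"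
    and reg: "\<And>K. compactin X K \<Longrightarrow> openin X K \<Longrightarrow> regular_open_in X K"
    and ab: "(a, b) \<in> R" and ag: "a g" and bg: "\<not> b g" and ba: "\<forall>h. b h \<longrightarrow> a h"
  shows "\<exists>V. V \<subseteq> U \<and> V \<noteq> {} \<and> compactin X V \<and> openin X V \<and> ((\<lambda>g. g \<in> V), (\<lambda>_. False)) \<in> R"
proof -
  note cf = cong_facts[OF cong]
  have aSB: "a \<in> steinberg_B G" and bSB: "b \<in> steinberg_B G" using cf(1)[OF ab] by auto
  obtain Fa where Fa: "finite Fa" "\<forall>B\<in>Fa. compact_open_bisection G B" "a = (\<lambda>h. \<exists>B\<in>Fa. h \<in> B)"
    using aSB unfolding steinberg_B_def by blast
  obtain Fb where Fb: "finite Fb" "\<forall>B\<in>Fb. compact_open_bisection G B" "b = (\<lambda>h. \<exists>B\<in>Fb. h \<in> B)"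
    using bSB unfolding steinberg_B_def by blast
  obtain B1 where B1: "B1 \<in> Fa" "g \<in> B1" using ag Fa(3) by auto
  have B1c: "compact_open_bisection G B1" using Fa B1 by blast
  have B1o: "openin X B1" using B1c unfolding compact_open_bisection_def by blast
  define Cb where "Cb = \<Union>Fb"
  have Cbc: "compactin X Cb" unfolding Cb_def
    using Fb unfolding compact_open_bisection_def by (intro compactin_Union) auto
  have Cbo: "openin X Cb" unfolding Cb_def
    using Fb unfolding compact_open_bisection_def by (intro openin_Union) auto
  have beq: "\<And>h. b h \<longleftrightarrow> h \<in> Cb" unfolding Cb_def using Fb(3) by auto
  have regC: "X interior_of (X closure_of Cb) = Cb" using reg[OF Cbc Cbo] unfolding regular_open_in_def .
  have "\<not> B1 \<subseteq> X closure_of Cb"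
  proof
    assume "B1 \<subseteq> X closure_of Cb"
    then have "B1 \<subseteq> X interior_of (X closure_of Cb)" using B1o interior_of_maximal by blast
    then have "g \<in> Cb" using regC B1 by blast
    then show False using bg beq by blast
  qed
  then obtain h where h: "h \<in> B1" "h \<notin> X closure_of Cb" by blast
  define Ob where "Ob = B1 - X closure_of Cb"
  have Obo: "openin X Ob" unfolding Ob_def using B1o closedin_closure_of by (rule openin_diff)
  obtain W where W: "compact_open_bisection G W" "h \<in> W" "W \<subseteq> Ob"
    using basis[OF Obo, of h] h unfolding Ob_def by blast
  have WA: "W \<subseteq> A" and Wo: "openin X W" using W(1) unfolding compact_open_bisection_def bisection_def by blast+
  have CbX: "Cb \<subseteq> X closure_of Cb"
    using closure_of_subset[OF openin_subset[OF Cbo]] .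
  have Wdisj: "\<forall>w\<in>W. \<not> b w"
  proof
    fix w assume "w \<in> W"
    then have "w \<notin> Cb" using W(3) CbX unfolding Ob_def by blast
    then show "\<not> b w" using beq by simp
  qed
  have Wa: "\<forall>w\<in>W. a w"
  proof
    fix w assume "w \<in> W"
    then have "w \<in> B1" using W(3) unfolding Ob_def by blast
    then show "a w" using B1(1) Fa(3) by auto
  qed
  define p where "p = st_conv G (\<lambda>g. g \<in> i ` W) a"
  define q where "q = st_conv G (\<lambda>g. g \<in> i ` W) b"
  have pq: "(p, q) \<in> R" unfolding p_def q_def using cf(7)[OF ab cob_SB[OF inv_cob[OF W(1)]]] .
  have pW: "\<forall>u\<in>s ` W. p u" unfolding p_def using conv_iW_a[OF WA Wa] by blast
  have bA: "\<forall>g. b g \<longrightarrow> g \<in> A" using SB_A[OF bSB] by blast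
  have qU: "\<forall>u\<in>U. \<not> q u" unfolding q_def using conv_iW_b[OF WA bA Wdisj] by blast
  have qSB: "q \<in> steinberg_B G" using cf(1)[OF pq] by blast
  obtain Fq where Fq: "finite Fq" "\<forall>B\<in>Fq. compact_open_bisection G B" "q = (\<lambda>h. \<exists>B\<in>Fq. h \<in> B)"
    using qSB unfolding steinberg_B_def by blast
  have Fq2: "\<forall>D\<in>Fq. compact_open_bisection G D \<and> D \<inter> U = {}"
  proof
    fix D assume D: "D \<in> Fq"
    have "D \<inter> U = {}"
    proof (rule ccontr)
      assume "D \<inter> U \<noteq> {}"
      then obtain u where "u \<in> D" "u \<in> U" by blast
      then have "q u" using D Fq(3) by blast
      then show False using qU \<open>u \<in> U\<close> by blast
    qed
    then show "compact_open_bisection G D \<and> D \<inter> U = {}" using Fq(2) D by blast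
  qed
  have O0: "openin X (s ` W)" "s ` W \<noteq> {}" "s ` W \<subseteq> U" using s_open[OF Wo] W(2) WA by auto
  obtain O' where O': "openin X O'" "O' \<noteq> {}" "O' \<subseteq> s ` W" "\<forall>D\<in>Fq. \<forall>d\<in>D. \<not> (s d \<in> O' \<and> r d \<in> O')"
    using shrink[OF eff Fq(1) Fq2 O0] by blast
  obtain x0 where x0: "x0 \<in> O'" using O'(2) by blast
  have "x0 \<in> U" using x0 O'(3) O0(3) by blast
  then obtain V where V: "compactin X V" "openin X V" "x0 \<in> V" "V \<subseteq> O'" "V \<subseteq> U"
    using zd[OF O'(1) x0] by blast
  have Vc: "compact_open_bisection G V" using unit_cob[OF V(5) V(1) V(2)] .
  have zV: "(\<lambda>g. g \<in> V) \<in> steinberg_B G" using cob_SB[OF Vc] .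
  have 1: "(st_conv G (\<lambda>g. g \<in> V) (st_conv G p (\<lambda>g. g \<in> V)),
            st_conv G (\<lambda>g. g \<in> V) (st_conv G q (\<lambda>g. g \<in> V))) \<in> R"
    using cf(7)[OF cf(6)[OF pq zV] zV] .
  have qA: "\<forall>g. q g \<longrightarrow> g \<in> A" using SB_A[OF qSB] by blast
  have nq: "\<forall>e. q e \<longrightarrow> \<not> (s e \<in> V \<and> r e \<in> V)"
  proof (intro allI impI notI)
    fix e assume "q e" "s e \<in> V \<and> r e \<in> V"
    then obtain D where "D \<in> Fq" "e \<in> D" using Fq(3) by auto
    moreover have "s e \<in> O'" "r e \<in> O'" using \<open>s e \<in> V \<and> r e \<in> V\<close> V(4) by blast+
    ultimately show False using O'(4) by blast
  qed
  have q'0: "st_conv G (\<lambda>g. g \<in> V) (st_conv G q (\<lambda>g. g \<in> V)) = (\<lambda>_. False)"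
    using conv_V_zero[OF V(5) qA nq] .
  define p' where "p' = st_conv G (\<lambda>g. g \<in> V) (st_conv G p (\<lambda>g. g \<in> V))"
  have pV: "\<forall>v\<in>V. p v" using pW V(4) O'(3) by blast
  have p'V: "\<forall>v\<in>V. p' v" unfolding p'_def using conv_V_sq[OF V(5) pV] .
  have 2: "(p', \<lambda>_. False) \<in> R" using 1 q'0 unfolding p'_def by simp
  have "(st_add p' (\<lambda>g. g \<in> V), st_add (\<lambda>_. False) (\<lambda>g. g \<in> V)) \<in> R" using cf(5)[OF 2 zV] .
  moreover have "st_add p' (\<lambda>g. g \<in> V) = p'" using p'V by (auto simp: st_add_def)
  moreover have "st_add (\<lambda>_. False) (\<lambda>g. g \<in> V) = (\<lambda>g. g \<in> V)" by (simp add: st_add_def)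
  ultimately have "(p', \<lambda>g. g \<in> V) \<in> R" by simp
  then have "((\<lambda>g. g \<in> V), p') \<in> R" by (rule cf(3))
  then have "((\<lambda>g. g \<in> V), \<lambda>_. False) \<in> R" using 2 by (rule cf(4))
  then show ?thesis using V by blast
qed

end

theorem corollary3p9:
  fixes G :: "('a, 'b) groupoid_scheme"
  assumes "ample_groupoid G"
    and "second_countable (gtop G)"
    and "minimal_groupoid G"
    and "effective_groupoid G"
    and "\<And>K. compactin (gtop G) K \<Longrightarrow> openin (gtop G) K \<Longrightarrow> regular_open_in (gtop G) K"
  shows "congruence_simple (steinberg_B G) st_add (st_conv G)"
proof -
  have tg: "topological_groupoid G" and lc: "locally_compact_space (subtopology (gtop G) (units G))"
    and Hd: "Hausdorff_space (subtopology (gtop G) (units G))"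
    and td: "totally_disconnected_space (subtopology (gtop G) (units G))"
    and lhs: "local_homeo_to_units G (src G)" and lhr: "local_homeo_to_units G (rng G)"
    using assms(1) unfolding ample_groupoid_def by blast+
  have grp: "is_groupoid G" and icont: "continuous_map (gtop G) (gtop G) (ginv G)"
    using tg unfolding topological_groupoid_def by blast+
  have eff: "gtop G interior_of isotropy G = units G"
    using assms(4) unfolding effective_groupoid_def .
  have U0open: "openin (gtop G) (units G)" using openin_interior_of[of "gtop G" "isotropy G"] eff by simp
  interpret agp G
    using grp U0open lhs lhr icont lc Hd td by unfold_locales
  show ?thesis unfolding congruence_simple_def
  proof (intro allI impI)
    fix R assume cong: "hemiring_congruence (steinberg_B G) st_add (st_conv G) R"
    note cf = cong_facts[OF cong]
    show "R = steinberg_B G \<times> steinberg_B G \<or> R = Id_on (steinberg_B G)"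
    proof (cases "R = Id_on (steinberg_B G)")
      case True then show ?thesis by blast
    next
      case False
      have "Id_on (steinberg_B G) \<subseteq> R" using cf(2) by auto
      then have "\<not> R \<subseteq> Id_on (steinberg_B G)" using False by (metis subset_antisym)
      then obtain pr where pr: "pr \<in> R" "pr \<notin> Id_on (steinberg_B G)" by (meson subsetI)
      obtain x y where "pr = (x, y)" by (cases pr)
      then have xy: "(x, y) \<in> R" "(x, y) \<notin> Id_on (steinberg_B G)" using pr by simp_all
      have "x \<in> steinberg_B G" using cf(1)[OF xy(1)] by blast
      then have "x \<noteq> y" using xy(2) by auto
      then obtain g where g: "x g \<noteq> y g" by blast
      have gen: "\<exists>V. V \<subseteq> units G \<and> V \<noteq> {} \<and> compactin (gtop G) V \<and> openin (gtop G) V \<and>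
                 ((\<lambda>g. g \<in> V), (\<lambda>_. False)) \<in> R"
        if xy': "(x', y') \<in> R" "x' g" "\<not> y' g" for x' y'
      proof -
        have ySB: "y' \<in> steinberg_B G" using cf(1)[OF xy'(1)] by blast
        have "(st_add x' y', st_add y' y') \<in> R" using cf(5)[OF xy'(1) ySB] .
        moreover have "st_add y' y' = y'" by (simp add: st_add_def)
        ultimately have ab: "(st_add x' y', y') \<in> R" by simp
        have ag: "st_add x' y' g" using xy' by (simp add: st_add_def)
        have ba: "\<forall>h. y' h \<longrightarrow> st_add x' y' h" by (simp add: st_add_def)
        show ?thesis using core[OF cong eff assms(5) ab ag xy'(3) ba] .
      qed
      have "\<exists>V. V \<subseteq> units G \<and> V \<noteq> {} \<and> compactin (gtop G) V \<and> openin (gtop G) V \<and>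
                 ((\<lambda>g. g \<in> V), (\<lambda>_. False)) \<in> R"
      proof (cases "x g")
        case True
        then have "\<not> y g" using g by simp
        then show ?thesis using gen[OF xy(1) True] by blast
      next
        case False
        then have "y g" using g by simp
        then show ?thesis using gen[OF cf(3)[OF xy(1)] _ False] by blast
      qed
      then obtain V where V: "V \<subseteq> units G" "V \<noteq> {}" "compactin (gtop G) V" "openin (gtop G) V"
        "((\<lambda>g. g \<in> V), (\<lambda>_. False)) \<in> R" by blast
      have "R = steinberg_B G \<times> steinberg_B G" using spread[OF cong assms(3) V] .
      then show ?thesis by blast
    qed
  qed
qed

end
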